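(* Let $P(X,Y,Z)=X+\frac{1}{X}+Y+\frac{1}{Y}+Z+\frac{1}{Z}-2$ and let $D_P=\{(X,Y,Z)\in(\mathbb{C}^\times)^3 : P(X,Y,Z)=0,\ |X|=|Y|=1,\ |Z|>1\}$. The map $(X,Y,Z)\mapsto Z$ defines a fibration of $D_P\setminus\{(-1,-1,3+2\sqrt{2})\}$ above the interval $(1,3+2\sqrt{2})$. The fibres are homeomorphic to $S^1$ and, writing $X=e^{i\phi}$, $Y=e^{i\psi}$, the fibre above $Z$ is given by the implicit equation \[ \cos\phi+\cos\psi = 1-\frac12\Big(Z+\frac1Z\Big). \] *)

theory Defs
  imports "HOL-Analysis.Analysis"
begin

definition P :: "complex \<Rightarrow> complex \<Rightarrow> complex \<Rightarrow> complex" where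
  "P X Y Z = X + 1/X + Y + 1/Y + Z + 1/Z - 2"

definition D_P :: "(complex \<times> complex \<times> complex) set" where
  "D_P = {(X, Y, Z). X \<noteq> 0 \<and> Y \<noteq> 0 \<and> Z \<noteq> 0 \<and> P X Y Z = 0 \<and>
                     cmod X = 1 \<and> cmod Y = 1 \<and> cmod Z > 1}"

definition fibre_bundle ::
  "('a::topological_space \<Rightarrow> 'b::topological_space) \<Rightarrow> 'a set \<Rightarrow> 'b set \<Rightarrow> 'c::topological_space set \<Rightarrow> bool" where
  "fibre_bundle p E B F \<longleftrightarrow>
     continuous_on E p \<and> p ` E \<subseteq> B \<and>
     (\<forall>b\<in>B. \<exists>U. openin (top_of_set B) U \<and> b \<in> U \<and>
        (\<exists>h k. homeomorphism {e\<in>E. p e \<in> U} (U \<times> F) h k \<and>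
               (\<forall>e\<in>E. p e \<in> U \<longrightarrow> fst (h e) = p e)))"

end

theory Submission
  imports Defs
begin
lemma unit_add_inv: "cmod X = 1 \<Longrightarrow> X + 1/X = complex_of_real (2 * Re X)"
  by (simp add: complex_eq_iff divide_complex_def inverse_complex_def cmod_def power2_eq_square)
lemma sqrt_tabs: "sqrt (t * \<bar>t\<bar>) = t" 
  by (cases "t \<ge> 0") (auto simp: real_sqrt_minus)
lemma sqrt_abs2: "sqrt m * \<bar>sqrt m\<bar> = m"
  by (cases "m \<ge> 0") (auto simp: abs_mult_self_eq)

lemma unit_eq: "cmod X = 1 \<Longrightarrow> Re X = -1 \<Longrightarrow> X = -1"
  by (simp add: complex_eq_iff cmod_def)

lemma bound_up: assumes "(1::real) < t" "t + 1/t \<le> 6" shows "t \<le> 3 + 2* sqrt 2"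
proof (rule ccontr)
  assume "\<not> ?thesis"
  hence h: "t - 3 > 2 * sqrt 2" by simp
  have "(2* sqrt 2)^2 < (t-3)^2" using h by (intro power_strict_mono) auto
  hence "8 < (t-3)^2" by (simp add: power_mult_distrib)
  moreover have "t*t + 1 \<le> 6*t" using assms by (simp add: field_simps)
  ultimately show False by (simp add: power2_eq_square algebra_simps)
qed

lemma bound_eq: "(3 + 2* sqrt 2) + 1/(3 + 2* sqrt 2) = (6::real)"
proof -
  have "(3 + 2* sqrt 2) * (3 - 2* sqrt 2) = (1::real)" by (simp add: algebra_simps)
  hence "1/(3 + 2* sqrt 2) = 3 - 2 * sqrt (2::real)"
    by (metis add_pos_pos mult_pos_pos nonzero_mult_div_cancel_left not_numeral_le_zero real_sqrt_gt_0_iff zero_less_numeral div_by_1 order.strict_iff_not)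
  thus ?thesis by simp
qed

lemma E_char:
  "(X,Y,Z) \<in> D_P - {(-1, -1, complex_of_real (3 + 2 * sqrt 2))} \<longleftrightarrow>
    cmod X = 1 \<and> cmod Y = 1 \<and> Im Z = 0 \<and> 1 < Re Z \<and> Re Z < 3 + 2 * sqrt 2 \<and>
    Re X + Re Y = 1 - (Re Z + 1 / Re Z) / 2" (is "?L \<longleftrightarrow> ?R")
proof
  assume L: ?L
  hence X: "cmod X = 1" and Y: "cmod Y = 1" and Z: "cmod Z > 1" and Pz: "P X Y Z = 0"
    and ne: "(X,Y,Z) \<noteq> (-1, -1, complex_of_real (3 + 2 * sqrt 2))"
    by (auto simp: D_P_def)
  define t where "t = Re Z"
  define s where "s = Im Z"
  have Zts: "Z = Complex t s" by (simp add: t_def s_def)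
  have ns: "t^2 + s^2 > 1" using Z by (simp add: Zts cmod_def)
  have eq: "complex_of_real (2 * Re X) + complex_of_real (2 * Re Y) + Z + 1/Z - 2 = 0"
    using Pz unfolding P_def unit_add_inv[OF X, symmetric] unit_add_inv[OF Y, symmetric]
    by (simp add: algebra_simps)
  have "Im (complex_of_real (2 * Re X) + complex_of_real (2 * Re Y) + Z + 1/Z - 2) = 0"
    using eq by simp
  hence "s - s / (t^2 + s^2) = 0" by (simp add: Zts divide_complex_def)
  hence "s * (1 - 1/(t^2+s^2)) = 0" by (simp add: algebra_simps)
  moreover have "1 - 1/(t^2+s^2) \<noteq> 0" using ns by simp
  ultimately have s0: "s = 0" by (metis mult_eq_0_iff)
  have "Re (complex_of_real (2 * Re X) + complex_of_real (2 * Re Y) + Z + 1/Z - 2) = 0"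
    using eq by simp
  hence req: "2 * Re X + 2 * Re Y + t + 1/t - 2 = 0"
    by (simp add: Zts s0 divide_complex_def power2_eq_square split: if_splits)
  have tt1: "1 < t*t" using ns s0 by (simp add: power2_eq_square)
  have t1: "\<bar>t\<bar> > 1"
  proof (rule ccontr)
    assume "\<not> ?thesis"
    hence "\<bar>t\<bar> * \<bar>t\<bar> \<le> 1" by (intro mult_le_one) auto
    thus False using tt1 by (simp add: abs_mult_self_eq)
  qed
  have rx: "\<bar>Re X\<bar> \<le> 1" "\<bar>Re Y\<bar> \<le> 1" using abs_Re_le_cmod[of X] abs_Re_le_cmod[of Y] X Y by auto
  have tpos: "t > 1"
  proof (rule ccontr)
    assume "\<not> t > 1"
    hence tn: "t < -1" using t1 by auto
    have "t + 1/t + 2 = (t+1)^2 / t" using tn by (simp add: field_simps power2_eq_square)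
    also have "\<dots> < 0" using tn by (intro divide_pos_neg) auto
    finally show False using req rx by auto
  qed
  have tle: "t \<le> 3 + 2 * sqrt 2" using bound_up[OF tpos] req rx by auto
  have tlt: "t < 3 + 2 * sqrt 2"
  proof (rule ccontr)
    assume "\<not> ?thesis"
    hence tt: "t = 3 + 2 * sqrt 2" using tle by auto
    hence "Re X + Re Y = -2" using req bound_eq by simp
    hence "Re X = -1" "Re Y = -1" using rx by auto
    hence "X = -1" "Y = -1" using unit_eq X Y by auto
    moreover have "Z = complex_of_real (3 + 2 * sqrt 2)" using tt s0 Zts by (simp add: complex_eq_iff)
    ultimately show False using ne by simp
  qed
  show ?R using X Y s0 tpos tlt req unfolding t_def s_def by (simp add: field_simps)
next
  assume R: ?R
  hence X: "cmod X = 1" and Y: "cmod Y = 1" by auto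
  have Zr: "Z = complex_of_real (Re Z)" using R by (simp add: complex_eq_iff)
  have "Z + 1/Z = complex_of_real (Re Z + 1 / Re Z)" by (metis Zr of_real_add of_real_divide of_real_1)
  hence "P X Y Z = (X + 1/X) + (Y + 1/Y) + complex_of_real (Re Z + 1 / Re Z) - 2"
    unfolding P_def by (simp add: algebra_simps)
  also have "\<dots> = complex_of_real (2 * Re X + 2 * Re Y + (Re Z + 1 / Re Z) - 2)"
    by (simp add: unit_add_inv[OF X] unit_add_inv[OF Y])
  also have "2 * Re X + 2 * Re Y + (Re Z + 1 / Re Z) - 2 = 0"
  proof -
    have "\<And>a b u::real. a + b = 1 - u/2 \<Longrightarrow> 2*a + 2*b + u - 2 = 0" by linarith
    thus ?thesis using R by blast
  qed
  finally have "P X Y Z = 0" by simp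
  moreover have "cmod Z > 1" using R by (subst Zr) auto
  moreover have "Z \<noteq> complex_of_real (3 + 2 * sqrt 2)" using R by auto
  ultimately show ?L using X Y by (auto simp: D_P_def)
qed
definition kk :: "real \<Rightarrow> real" where "kk t = 3 - (t + 1/t)/2"
definition fx :: "complex \<Rightarrow> real" where "fx X = Im X * \<bar>Im X\<bar> / (1 - Re X)"
definition nz :: "complex \<Rightarrow> complex" where "nz w = w / complex_of_real (cmod w)"
definition bx :: "real \<Rightarrow> real \<Rightarrow> complex" where
  "bx K x = Complex (\<bar>x\<bar> * K - 1) (sqrt (x * K * (2 - \<bar>x\<bar> * K)))"

lemma kk_range: assumes "1 < t" "t < 3 + 2 * sqrt 2" shows "0 < kk t" "kk t < 2"
proof -
  have "t - 3 < 2 * sqrt 2" using assms by simp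
  moreover have "-(2 * sqrt 2) < t - 3"
  proof -
    have "(1::real) < sqrt 2" by simp
    thus ?thesis using assms by linarith
  qed
  ultimately have "\<bar>t - 3\<bar> < 2 * sqrt 2" by linarith
  hence "\<bar>t - 3\<bar>^2 < (2 * sqrt 2)^2" by (intro power_strict_mono) auto
  hence "(t-3)^2 < 8" by (simp add: power_mult_distrib)
  hence "t*t + 1 < 6 * t" by (simp add: power2_eq_square algebra_simps)
  hence "t + 1/t < 6" using assms by (simp add: field_simps)
  thus "0 < kk t" by (simp add: kk_def)
  have "0 < (t - 1)^2" using assms by simp
  hence "2 * t < t*t + 1" by (simp add: power2_eq_square algebra_simps)
  hence "2 < t + 1/t" using assms by (simp add: field_simps)
  thus "kk t < 2" by (simp add: kk_def)
qed

lemma im2: "cmod X = 1 \<Longrightarrow> (Im X)^2 = 1 - (Re X)^2"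
  by (simp add: cmod_def)

lemma G1: assumes "cmod X = 1" "Re X < 1" "k > 0"
  shows "\<bar>fx X / k\<bar> * k = 1 + Re X" "bx k (fx X / k) = X"
proof -
  have i: "\<bar>Im X\<bar> * \<bar>Im X\<bar> = (1 - Re X) * (1 + Re X)"
    using im2[OF assms(1)] by (simp add: power2_eq_square algebra_simps)
  have "\<bar>fx X\<bar> = \<bar>Im X\<bar> * \<bar>Im X\<bar> / (1 - Re X)" using assms
    by (simp add: fx_def abs_mult)
  also have "\<dots> = 1 + Re X" using i assms by simp
  finally have a: "\<bar>fx X\<bar> = 1 + Re X" .
  thus "\<bar>fx X / k\<bar> * k = 1 + Re X" using assms by simp
  have "fx X / k * k * (2 - \<bar>fx X / k\<bar> * k) = fx X * (1 - Re X)"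
    using assms a by simp
  also have "\<dots> = Im X * \<bar>Im X\<bar>" using assms by (simp add: fx_def)
  finally show "bx k (fx X / k) = X" using a assms
    by (simp add: bx_def complex_eq_iff sqrt_tabs)
qed

lemma G2: assumes "\<bar>x\<bar> + \<bar>y\<bar> = 1"
  shows "cmod (nz (Complex x y)) = 1"
    "Re (nz (Complex x y)) / (\<bar>Re (nz (Complex x y))\<bar> + \<bar>Im (nz (Complex x y))\<bar>) = x"
    "Im (nz (Complex x y)) / (\<bar>Re (nz (Complex x y))\<bar> + \<bar>Im (nz (Complex x y))\<bar>) = y"
proof -
  have ne: "Complex x y \<noteq> 0" using assms by (auto simp: complex_eq_iff)
  hence r: "cmod (Complex x y) > 0" by simp
  show "cmod (nz (Complex x y)) = 1" using ne by (simp add: nz_def norm_divide)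
  have re: "Re (nz (Complex x y)) = x / cmod (Complex x y)" and im: "Im (nz (Complex x y)) = y / cmod (Complex x y)"
    by (simp_all add: nz_def)
  have s: "\<bar>Re (nz (Complex x y))\<bar> + \<bar>Im (nz (Complex x y))\<bar> = 1 / cmod (Complex x y)"
    unfolding re im using r assms by (simp add: abs_divide add_divide_distrib[symmetric])
  show "Re (nz (Complex x y)) / (\<bar>Re (nz (Complex x y))\<bar> + \<bar>Im (nz (Complex x y))\<bar>) = x"
    using r by (subst s) (simp add: re)
  show "Im (nz (Complex x y)) / (\<bar>Re (nz (Complex x y))\<bar> + \<bar>Im (nz (Complex x y))\<bar>) = y"
    using r by (subst s) (simp add: im)
qed

lemma sq_sqrt: "(sqrt m)^2 = \<bar>m\<bar>"
proof (cases "m \<ge> 0")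
  case False
  hence "sqrt m = - sqrt (-m)" by (simp add: real_sqrt_minus)
  thus ?thesis using False by simp
qed simp

lemma G3: assumes "\<bar>x\<bar> \<le> 1" "0 < K" "K < 2"
  shows "cmod (bx K x) = 1" "Re (bx K x) = \<bar>x\<bar> * K - 1" "fx (bx K x) / K = x" "Re (bx K x) < 1"
proof -
  have xk: "\<bar>x\<bar> * K < 2" using assms by (smt (verit) mult_left_le_one_le)
  have xk0: "0 \<le> \<bar>x\<bar> * K" using assms by simp
  have m: "\<bar>x * K * (2 - \<bar>x\<bar> * K)\<bar> = \<bar>x\<bar> * K * (2 - \<bar>x\<bar> * K)"
    using xk assms by (simp add: abs_mult)
  have "(Im (bx K x))^2 = \<bar>x\<bar> * K * (2 - \<bar>x\<bar> * K)"
    by (simp add: bx_def m[symmetric] sq_sqrt)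
  hence "(Re (bx K x))^2 + (Im (bx K x))^2 = 1"
    by (simp add: bx_def power2_eq_square algebra_simps)
  thus "cmod (bx K x) = 1" by (simp add: cmod_def)
  show "Re (bx K x) = \<bar>x\<bar> * K - 1" by (simp add: bx_def)
  show "Re (bx K x) < 1" using xk by (simp add: bx_def)
  have "fx (bx K x) = x * K * (2 - \<bar>x\<bar> * K) / (2 - \<bar>x\<bar> * K)"
    by (simp add: fx_def bx_def sqrt_abs2)
  also have "\<dots> = x * K" using xk by simp
  finally show "fx (bx K x) / K = x" using assms by simp
qed

lemma G4: assumes "cmod w = 1" "n > 0"
  shows "nz (Complex (Re w / n) (Im w / n)) = w"
proof -
  have "Complex (Re w / n) (Im w / n) = w / complex_of_real n" by (simp add: complex_eq_iff)
  thus ?thesis using assms by (simp add: nz_def norm_divide)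
qed
definition fwd :: "complex \<times> complex \<times> complex \<Rightarrow> complex \<times> complex" where
  "fwd q = (snd (snd q), nz (Complex (fx (fst q) / (Re (fst q) + Re (fst (snd q)) + 2))
                                      (fx (fst (snd q)) / (Re (fst q) + Re (fst (snd q)) + 2))))"
definition bk :: "complex \<times> complex \<Rightarrow> complex \<times> complex \<times> complex" where
  "bk p = (bx (kk (Re (fst p))) (Re (snd p) / (\<bar>Re (snd p)\<bar> + \<bar>Im (snd p)\<bar>)),
           bx (kk (Re (fst p))) (Im (snd p) / (\<bar>Re (snd p)\<bar> + \<bar>Im (snd p)\<bar>)), fst p)"

abbreviation "EE \<equiv> D_P - {(-1, -1, complex_of_real (3 + 2 * sqrt 2))}"
abbreviation "BB \<equiv> complex_of_real ` {1<..<3 + 2 * sqrt 2}"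

lemma LA: assumes "q \<in> EE" shows "fwd q \<in> BB \<times> sphere 0 1" "bk (fwd q) = q"
proof -
  obtain X Y Z where q: "q = (X,Y,Z)" by (cases q) auto
  have c: "cmod X = 1" "cmod Y = 1" "Im Z = 0" "1 < Re Z" "Re Z < 3 + 2 * sqrt 2"
    "Re X + Re Y = 1 - (Re Z + 1 / Re Z) / 2" using assms unfolding q E_char by auto
  define k where "k = Re X + Re Y + 2"
  have kk: "k = kk (Re Z)" using c by (simp add: k_def kk_def)
  have k0: "0 < k" "k < 2" using kk_range[OF c(4,5)] kk by auto
  have rx: "-1 \<le> Re X" "-1 \<le> Re Y" using abs_Re_le_cmod[of X] abs_Re_le_cmod[of Y] c by auto
  have rX: "Re X < 1" "Re Y < 1" using k0 rx unfolding k_def by linarith+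
  note g1 = G1[OF c(1) rX(1) k0(1)] G1[OF c(2) rX(2) k0(1)]
  have sum1: "\<bar>fx X / k\<bar> + \<bar>fx Y / k\<bar> = 1"
  proof -
    have "(\<bar>fx X / k\<bar> + \<bar>fx Y / k\<bar>) * k = k" using g1(1,3) unfolding k_def by (simp add: algebra_simps)
    thus ?thesis using k0 by simp
  qed
  have Zr: "Z = complex_of_real (Re Z)" using c by (simp add: complex_eq_iff)
  have fq: "fwd q = (Z, nz (Complex (fx X / k) (fx Y / k)))" by (simp add: fwd_def q k_def)
  show "fwd q \<in> BB \<times> sphere 0 1" unfolding fq using G2(1)[OF sum1] c Zr
    by (auto intro!: image_eqI[of Z _ "Re Z"])
  have "bk (fwd q) = (bx (kk (Re Z)) (fx X / k), bx (kk (Re Z)) (fx Y / k), Z)"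
    unfolding fq bk_def using G2(2,3)[OF sum1] by simp
  thus "bk (fwd q) = q" using g1(2,4) kk q by simp
qed

lemma LB: assumes "p \<in> BB \<times> sphere 0 1" shows "bk p \<in> EE" "fwd (bk p) = p"
proof -
  obtain t w where p: "p = (complex_of_real t, w)" and t: "1 < t" "t < 3 + 2 * sqrt 2" and w: "cmod w = 1"
    using assms by auto
  define n where "n = \<bar>Re w\<bar> + \<bar>Im w\<bar>"
  have "w \<noteq> 0" using w by auto
  hence "Re w \<noteq> 0 \<or> Im w \<noteq> 0" by (simp add: complex_eq_iff)
  hence n0: "n > 0" by (auto simp: n_def)
  define x where "x = Re w / n"
  define y where "y = Im w / n"
  have xy: "\<bar>x\<bar> + \<bar>y\<bar> = 1" using n0 by (simp add: x_def y_def n_def abs_divide add_divide_distrib[symmetric])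
  have x1: "\<bar>x\<bar> \<le> 1" "\<bar>y\<bar> \<le> 1" using xy by auto
  define K where "K = kk t"
  have K: "0 < K" "K < 2" using kk_range[OF t] by (auto simp: K_def)
  have bp: "bk p = (bx K x, bx K y, complex_of_real t)"
    by (simp add: bk_def p K_def x_def y_def n_def)
  note g3 = G3[OF x1(1) K] G3[OF x1(2) K]
  have "(\<bar>x\<bar> + \<bar>y\<bar>) * K = K" using xy by simp
  hence sumre: "Re (bx K x) + Re (bx K y) = K - 2" using g3(2,6) by (simp add: algebra_simps)
  show "bk p \<in> EE" unfolding bp E_char using g3 t sumre by (simp add: K_def kk_def)
  have "fwd (bk p) = (complex_of_real t, nz (Complex (fx (bx K x) / (Re (bx K x) + Re (bx K y) + 2))
       (fx (bx K y) / (Re (bx K x) + Re (bx K y) + 2))))" by (simp add: bp fwd_def)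
  also have "\<dots> = (complex_of_real t, nz (Complex x y))" using sumre g3(3,7) by simp
  also have "\<dots> = p" using G4[OF w n0] p by (simp add: x_def y_def)
  finally show "fwd (bk p) = p" .
qed
lemma EEprops: assumes "q \<in> EE"
  shows "Re (fst q) < 1" "Re (fst (snd q)) < 1" "Re (fst q) + Re (fst (snd q)) + 2 > 0"
proof -
  obtain X Y Z where q: "q = (X,Y,Z)" by (cases q) auto
  have c: "cmod X = 1" "cmod Y = 1" "Im Z = 0" "1 < Re Z" "Re Z < 3 + 2 * sqrt 2"
    "Re X + Re Y = 1 - (Re Z + 1 / Re Z) / 2" using assms unfolding q E_char by auto
  have k0: "0 < kk (Re Z)" "kk (Re Z) < 2" using kk_range[OF c(4,5)] by auto
  have rx: "-1 \<le> Re X" "-1 \<le> Re Y" using abs_Re_le_cmod[of X] abs_Re_le_cmod[of Y] c by auto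
  show "Re (fst q) < 1" "Re (fst (snd q)) < 1" "Re (fst q) + Re (fst (snd q)) + 2 > 0"
  proof -
    define u where "u = Re Z + 1 / Re Z"
    have "u < 6" "2 < u" "Re X + Re Y = 1 - u/2" using k0 c(6) unfolding u_def kk_def by auto
    thus "Re (fst q) < 1" "Re (fst (snd q)) < 1" "Re (fst q) + Re (fst (snd q)) + 2 > 0"
      using rx unfolding q by auto
  qed
qed

lemma CF: "continuous_on EE fwd"
proof -
  have n: "\<And>q. q \<in> EE \<Longrightarrow> Complex (fx (fst q) / (Re (fst q) + Re (fst (snd q)) + 2))
           (fx (fst (snd q)) / (Re (fst q) + Re (fst (snd q)) + 2)) \<noteq> 0"
    using LA(1) by (fastforce simp: fwd_def nz_def)
  have c1: "continuous_on EE (\<lambda>q. Complex (fx (fst q) / (Re (fst q) + Re (fst (snd q)) + 2))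
           (fx (fst (snd q)) / (Re (fst q) + Re (fst (snd q)) + 2)))"
  proof -
    have e: "\<forall>q\<in>EE. 1 - Re (fst q) \<noteq> 0" "\<forall>q\<in>EE. 1 - Re (fst (snd q)) \<noteq> 0"
      "\<forall>q\<in>EE. Re (fst q) + Re (fst (snd q)) + 2 \<noteq> 0"
      using EEprops by fastforce+
    show ?thesis unfolding fx_def
      by (intro continuous_on_Complex continuous_intros) (use e in blast)+
  qed
  have c2: "continuous_on (-{0}) nz" unfolding nz_def by (intro continuous_intros) auto
  have "continuous_on EE (\<lambda>q. nz (Complex (fx (fst q) / (Re (fst q) + Re (fst (snd q)) + 2))
           (fx (fst (snd q)) / (Re (fst q) + Re (fst (snd q)) + 2))))"
  proof (rule continuous_on_compose2[OF c2 c1])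
    show "(\<lambda>q. Complex (fx (fst q) / (Re (fst q) + Re (fst (snd q)) + 2))
           (fx (fst (snd q)) / (Re (fst q) + Re (fst (snd q)) + 2))) ` EE \<subseteq> - {0}"
    proof (rule image_subsetI)
      fix q assume "q \<in> EE" from n[OF this] show "Complex (fx (fst q) / (Re (fst q) + Re (fst (snd q)) + 2))
           (fx (fst (snd q)) / (Re (fst q) + Re (fst (snd q)) + 2)) \<in> - {0}" by simp
    qed
  qed
  thus ?thesis unfolding fwd_def by (intro continuous_intros) auto
qed

lemma CB: "continuous_on (BB \<times> sphere 0 1) bk"
proof -
  have n: "\<And>p. p \<in> BB \<times> sphere 0 1 \<Longrightarrow> \<bar>Re (snd p)\<bar> + \<bar>Im (snd p)\<bar> \<noteq> 0"
  proof -
    fix p :: "complex \<times> complex" assume "p \<in> BB \<times> sphere 0 1"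
    hence "snd p \<noteq> 0" by auto
    hence "Re (snd p) \<noteq> 0 \<or> Im (snd p) \<noteq> 0" by (simp add: complex_eq_iff)
    thus "\<bar>Re (snd p)\<bar> + \<bar>Im (snd p)\<bar> \<noteq> 0" by auto
  qed
  have z: "\<And>p. p \<in> BB \<times> sphere 0 1 \<Longrightarrow> Re (fst p) \<noteq> 0" by auto
  show ?thesis
  proof -
    have nb: "\<forall>p\<in>BB \<times> sphere 0 1. \<bar>Re (snd p)\<bar> + \<bar>Im (snd p)\<bar> \<noteq> 0" using n by blast
    have zb: "\<forall>p\<in>BB \<times> sphere 0 1. Re (fst p) \<noteq> 0" using z by blast
    have tb: "\<forall>p\<in>BB \<times> sphere (0::complex) 1. (2::real) \<noteq> 0" by simp
    show ?thesis unfolding bk_def bx_def kk_def by (intro continuous_on_Complex continuous_intros) (rule nb zb tb)+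
  qed
qed
theorem lemma2p3:
  defines "E \<equiv> D_P - {(-1, -1, complex_of_real (3 + 2 * sqrt 2))}"
  shows "fibre_bundle (\<lambda>q. snd (snd q)) E (complex_of_real ` {1<..<3 + 2 * sqrt 2})
           (sphere (0::complex) 1) \<and>
         (\<forall>z\<in>{1<..<3 + 2 * sqrt 2}.
           {q\<in>E. snd (snd q) = complex_of_real z} homeomorphic sphere (0::complex) 1 \<and>
           {q\<in>E. snd (snd q) = complex_of_real z} =
             {(cis \<phi>, cis \<psi>, complex_of_real z) | \<phi> \<psi>.
                cos \<phi> + cos \<psi> = 1 - (z + 1 / z) / 2})"
proof -
  have hom: "homeomorphism E (BB \<times> sphere 0 1) fwd bk"
    unfolding E_def
    by (rule homeomorphismI[OF CF CB image_subsetI[OF LA(1)] image_subsetI[OF LB(1)] LA(2) LB(2)])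
  have fst_fwd: "\<And>q. fst (fwd q) = snd (snd q)" by (simp add: fwd_def)
  have pB: "snd (snd q) \<in> BB" if "q \<in> E" for q
  proof -
    have "fwd q \<in> BB \<times> sphere 0 1" using LA(1) that unfolding E_def by simp
    hence "fst (fwd q) \<in> BB" by (simp only: mem_Times_iff)
    thus ?thesis by (simp only: fst_fwd)
  qed
  have FB: "fibre_bundle (\<lambda>q. snd (snd q)) E BB (sphere (0::complex) 1)"
    unfolding fibre_bundle_def
  proof (intro conjI ballI)
    show "continuous_on E (\<lambda>q. snd (snd q))" by (intro continuous_intros)
    show "(\<lambda>q. snd (snd q)) ` E \<subseteq> BB" using pB by blast
    fix b assume "b \<in> BB"
    show "\<exists>U. openin (top_of_set BB) U \<and> b \<in> U \<and>
        (\<exists>h k. homeomorphism {e\<in>E. snd (snd e) \<in> U} (U \<times> sphere (0::complex) 1) h k \<and>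
               (\<forall>e\<in>E. snd (snd e) \<in> U \<longrightarrow> fst (h e) = snd (snd e)))"
    proof -
      have o: "openin (top_of_set BB) BB" by simp
      have "{e\<in>E. snd (snd e) \<in> BB} = E" using pB by blast
      hence h: "homeomorphism {e\<in>E. snd (snd e) \<in> BB} (BB \<times> sphere 0 1) fwd bk" using hom by simp
      have f: "\<forall>e\<in>E. snd (snd e) \<in> BB \<longrightarrow> fst (fwd e) = snd (snd e)" using fst_fwd by simp
      have ex: "\<exists>h k. homeomorphism {e\<in>E. snd (snd e) \<in> BB} (BB \<times> sphere (0::complex) 1) h k \<and>
               (\<forall>e\<in>E. snd (snd e) \<in> BB \<longrightarrow> fst (h e) = snd (snd e))"
        by (rule exI[where x=fwd], rule exI[where x=bk], rule conjI[OF h f])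
      show ?thesis by (intro exI[where x=BB] conjI o \<open>b \<in> BB\<close> ex)
    qed
  qed
  have FIB: "{q\<in>E. snd (snd q) = complex_of_real z} homeomorphic sphere (0::complex) 1 \<and>
           {q\<in>E. snd (snd q) = complex_of_real z} =
             {(cis \<phi>, cis \<psi>, complex_of_real z) | \<phi> \<psi>.
                cos \<phi> + cos \<psi> = 1 - (z + 1 / z) / 2}" if z: "z \<in> {1<..<3 + 2 * sqrt 2}" for z
  proof
    let ?F = "{q\<in>E. snd (snd q) = complex_of_real z}"
    have zB: "complex_of_real z \<in> BB" by (rule imageI[OF z])
    have "homeomorphism ?F (sphere 0 1) (\<lambda>q. snd (fwd q)) (\<lambda>w. bk (complex_of_real z, w))"
    proof (rule homeomorphismI)
      show "continuous_on ?F (\<lambda>q. snd (fwd q))"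
      proof (rule continuous_on_snd, rule continuous_on_subset[OF CF])
        show "?F \<subseteq> EE" unfolding E_def[symmetric] by blast
      qed
      show "continuous_on (sphere 0 1) (\<lambda>w. bk (complex_of_real z, w))"
      proof (rule continuous_on_compose2[OF CB])
        show "continuous_on (sphere 0 1) (Pair (complex_of_real z))"
          by (intro continuous_on_Pair continuous_on_const continuous_on_id)
        show "Pair (complex_of_real z) ` sphere 0 1 \<subseteq> BB \<times> sphere 0 1"
          using zB by (intro image_subsetI) (simp only: mem_Times_iff fst_conv snd_conv)
      qed
      show "(\<lambda>q. snd (fwd q)) ` ?F \<subseteq> sphere 0 1"
      proof (rule image_subsetI)
        fix q assume "q \<in> ?F"
        hence "fwd q \<in> BB \<times> sphere 0 1" using LA(1) unfolding E_def by simp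
        thus "snd (fwd q) \<in> sphere 0 1" by (simp only: mem_Times_iff)
      qed
      show "(\<lambda>w. bk (complex_of_real z, w)) ` sphere 0 1 \<subseteq> ?F"
      proof (rule image_subsetI)
        fix w :: complex assume "w \<in> sphere 0 1"
        hence "bk (complex_of_real z, w) \<in> EE" using LB(1) zB by simp
        moreover have "snd (snd (bk (complex_of_real z, w))) = complex_of_real z" by (simp add: bk_def)
        ultimately show "bk (complex_of_real z, w) \<in> ?F" unfolding E_def by simp
      qed
      show "bk (complex_of_real z, snd (fwd q)) = q" if "q \<in> ?F" for q
      proof -
        have "fwd q = (complex_of_real z, snd (fwd q))" using that fst_fwd by (metis (mono_tags) mem_Collect_eq prod.collapse)
        hence "bk (complex_of_real z, snd (fwd q)) = bk (fwd q)" by simp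
        also have "\<dots> = q" using LA(2) that unfolding E_def by blast
        finally show ?thesis .
      qed
      show "snd (fwd (bk (complex_of_real z, w))) = w" if "w \<in> sphere 0 1" for w
        using LB(2)[of "(complex_of_real z, w)"] zB that by simp
    qed
    thus "?F homeomorphic sphere (0::complex) 1" unfolding homeomorphic_def by blast
    show "?F = {(cis \<phi>, cis \<psi>, complex_of_real z) | \<phi> \<psi>. cos \<phi> + cos \<psi> = 1 - (z + 1 / z) / 2}"
    proof (intro set_eqI iffI)
      fix q assume q: "q \<in> ?F"
      obtain X Y Z where qq: "q = (X,Y,Z)" by (cases q) auto
      have qE: "(X,Y,Z) \<in> EE" and Zz: "Z = complex_of_real z" using q unfolding qq E_def by auto
      have c: "cmod X = 1" "cmod Y = 1" "Re X + Re Y = 1 - (Re Z + 1 / Re Z) / 2"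
        using qE unfolding E_char by auto
      have nz0: "X \<noteq> 0" "Y \<noteq> 0" using c by auto
      have "sgn X = X" "sgn Y = Y" using c by (simp_all add: sgn_div_norm)
      hence cx: "X = cis (Arg X)" "Y = cis (Arg Y)" using cis_Arg nz0 by metis+
      moreover have "cos (Arg X) = Re X" "cos (Arg Y) = Re Y"
        by (metis cis.sel(1) cx(1), metis cis.sel(1) cx(2))
      ultimately show "q \<in> {(cis \<phi>, cis \<psi>, complex_of_real z) | \<phi> \<psi>. cos \<phi> + cos \<psi> = 1 - (z + 1 / z) / 2}"
        using c Zz qq by (intro CollectI exI[of _ "Arg X"] exI[of _ "Arg Y"]) simp
    next
      fix q assume "q \<in> {(cis \<phi>, cis \<psi>, complex_of_real z) | \<phi> \<psi>. cos \<phi> + cos \<psi> = 1 - (z + 1 / z) / 2}"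
      then obtain \<phi> \<psi> where qq: "q = (cis \<phi>, cis \<psi>, complex_of_real z)" and e: "cos \<phi> + cos \<psi> = 1 - (z + 1 / z) / 2"
        by blast
      have "(cis \<phi>, cis \<psi>, complex_of_real z) \<in> EE" unfolding E_char using z e by simp
      thus "q \<in> ?F" unfolding qq E_def by simp
    qed
  qed
  show ?thesis by (rule conjI[OF FB], rule ballI, rule FIB)
qed
end
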